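(* Fix integers $1\le n<N$, probabilities $p_0,p_1\in(0,1)$, a nonempty collection $\mathcal V$ of subsets of $\{1,\dots,N\}$ each of cardinality $n$, integers $0\le m'_\alpha\le m_\alpha$, and a threshold $b\in\mathbb R$. Let $G^{(1)},G^{(2)},\ldots$ be random undirected graphs on the vertex set $\{1,\dots,N\}$, with adjacency matrices $G^{(t)}\in\{0,1\}^{N\times N}$. For a subset $V\in\mathcal V$ and integers $k\le t$ set \[ R_{t,k,V}=\sum_{\substack{i,j\in V\\ i<j}}\sum_{m=k}^{t}\Big[G^{(m)}_{ij}\log\frac{p_1}{p_0}+(1-G^{(m)}_{ij})\log\frac{1-p_1}{1-p_0}\Big], \] and define the stopping time \[ T_{\mathrm G}=\inf\Big\{t:\ \max_{t-m_\alpha\le k\le t-m'_\alpha}\ \max_{V\in\mathcal V} R_{t,k,V}>b\Big\}. \] Let $\mathbb P_\infty$ denote the probability measure under which $G^{(1)},G^{(2)},\ldots$ are i.i.d. Erdős–Rényi graphs $\mathrm{ER}(N,p_0)$, i.e. all entries $G^{(t)}_{ij}$, $i<j$, $t\ge1$, are independent Bernoulli$(p_0)$. Then \[ \sup_{\tau\ge 1}\mathbb P_\infty\big(\tau\le T_{\mathrm G}<\tau+m_\alpha\big)\le 2m_\alpha e^{-b}\binom{N}{n}. \]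
   Context: $\mathrm{ER}(N,p)$ denotes the Erdős–Rényi random graph on $N$ labeled vertices in which each of the $\binom N2$ possible edges is present independently with probability $p$; $G^{(t)}_{ij}=G^{(t)}_{ji}=1$ iff vertices $i$ and $j$ are joined at time $t$. The collection $\mathcal V$ is the set of candidate subgraphs (vertex subsets of size $n$) where a change might occur; $|\mathcal V|\le\binom Nn$. *)

theory Defs
  imports "HOL-Probability.Probability"
begin

text \<open>A random graph sequence is a family G t i j \<omega> (edge between i and j at time t, for outcome \<omega>).
Only entries with i < j are used.\<close>

definition llr_stat ::
  "real \<Rightarrow> real \<Rightarrow> (nat \<Rightarrow> nat \<Rightarrow> nat \<Rightarrow> 'a \<Rightarrow> bool) \<Rightarrow> 'a \<Rightarrow> nat \<Rightarrow> nat \<Rightarrow> nat set \<Rightarrow> real"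
  where
  "llr_stat p0 p1 G \<omega> t k V =
     (\<Sum>(i,j)\<in>{(i,j). i \<in> V \<and> j \<in> V \<and> i < j}.
        \<Sum>m\<in>{k..t}. of_bool (G m i j \<omega>) * ln (p1 / p0)
                    + (1 - of_bool (G m i j \<omega>)) * ln ((1 - p1) / (1 - p0)))"

definition alarm ::
  "real \<Rightarrow> real \<Rightarrow> nat set set \<Rightarrow> nat \<Rightarrow> nat \<Rightarrow> real \<Rightarrow>
   (nat \<Rightarrow> nat \<Rightarrow> nat \<Rightarrow> 'a \<Rightarrow> bool) \<Rightarrow> 'a \<Rightarrow> nat \<Rightarrow> bool"
  where
  "alarm p0 p1 \<V> m\<alpha> m\<alpha>' b G \<omega> t \<longleftrightarrow>
     1 \<le> t \<and> (\<exists>k. 1 \<le> k \<and> int t - int m\<alpha> \<le> int k \<and> int k \<le> int t - int m\<alpha>' \<and>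
                  (\<exists>V\<in>\<V>. llr_stat p0 p1 G \<omega> t k V > b))"

definition stop_time ::
  "real \<Rightarrow> real \<Rightarrow> nat set set \<Rightarrow> nat \<Rightarrow> nat \<Rightarrow> real \<Rightarrow>
   (nat \<Rightarrow> nat \<Rightarrow> nat \<Rightarrow> 'a \<Rightarrow> bool) \<Rightarrow> 'a \<Rightarrow> enat"
  where
  "stop_time p0 p1 \<V> m\<alpha> m\<alpha>' b G \<omega> =
     (if \<exists>t. alarm p0 p1 \<V> m\<alpha> m\<alpha>' b G \<omega> t
      then enat (LEAST t. alarm p0 p1 \<V> m\<alpha> m\<alpha>' b G \<omega> t) else \<infinity>)"

end

theory Submission
  imports Defs
begin

lemma first_cross_sets:
  fixes Y :: "nat \<Rightarrow> 'a \<Rightarrow> real"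
  assumes m: "\<And>s. s \<le> t \<Longrightarrow> Y s \<in> borel_measurable N"
  shows "{\<omega>\<in>space N. c < Y t \<omega> \<and> (\<forall>s\<in>{k..<t}. Y s \<omega> \<le> c)} \<in> sets N"
proof -
  have "{\<omega>\<in>space N. c < Y t \<omega> \<and> (\<forall>s\<in>{k..<t}. Y s \<omega> \<le> c)} =
     {\<omega>\<in>space N. c < Y t \<omega>} \<inter> {\<omega>\<in>space N. \<forall>s\<in>{k..<t}. Y s \<omega> \<le> c}" by auto
  also have "\<dots> \<in> sets N"
  proof (rule sets.Int)
    show "{\<omega>\<in>space N. c < Y t \<omega>} \<in> sets N"
      by (rule borel_measurable_less[OF measurable_const m[OF order_refl]]) simp
    show "{\<omega>\<in>space N. \<forall>s\<in>{k..<t}. Y s \<omega> \<le> c} \<in> sets N"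
      by (rule sets.sets_Collect_finite_All, rule borel_measurable_le[OF m measurable_const]) auto
  qed
  finally show ?thesis .
qed

lemma pi_prod_meas:
  assumes "S \<subseteq> A"
  shows "(\<lambda>f. \<Prod>x\<in>S. (\<phi>::bool\<Rightarrow>real) (f x)) \<in> borel_measurable (PiM A (\<lambda>_. count_space UNIV))"
  by (rule borel_measurable_prod, rule measurable_compose[OF measurable_component_singleton]) (use assms in auto)

context prob_space
begin

lemma phiX_meas:
  assumes ind: "indep_vars (\<lambda>_. count_space UNIV) X Ix" and x: "x \<in> Ix"
  shows "(\<lambda>\<omega>. (\<phi>::bool \<Rightarrow> real) (X x \<omega>)) \<in> borel_measurable M"
proof -
  have "X x \<in> measurable M (count_space UNIV)" using ind x by (auto simp: indep_vars_def)
  then show ?thesis by (rule measurable_compose) simp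
qed

lemma prod_phi_meas:
  assumes ind: "indep_vars (\<lambda>_. count_space UNIV) X Ix" and S: "S \<subseteq> Ix"
  shows "(\<lambda>\<omega>. \<Prod>x\<in>S. (\<phi>::bool \<Rightarrow> real) (X x \<omega>)) \<in> borel_measurable M"
  by (rule borel_measurable_prod) (use phiX_meas[OF ind] S in auto)

lemma prod_phi_bound:
  assumes "\<And>b. 0 < (\<phi>::bool \<Rightarrow> real) b"
  shows "norm (\<Prod>x\<in>S. \<phi> (X x \<omega>)) \<le> max (\<phi> True) (\<phi> False) ^ card S"
proof -
  have "norm (\<Prod>x\<in>S. \<phi> (X x \<omega>)) = (\<Prod>x\<in>S. \<phi> (X x \<omega>))"
    using assms by (simp add: prod_pos less_imp_le)
  also have "\<dots> \<le> (\<Prod>x\<in>S. max (\<phi> True) (\<phi> False))"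
  proof (rule prod_mono)
    fix i show "0 \<le> \<phi> (X i \<omega>) \<and> \<phi> (X i \<omega>) \<le> max (\<phi> True) (\<phi> False)"
      using assms[of "X i \<omega>"] by (cases "X i \<omega>") auto
  qed
  also have "\<dots> = max (\<phi> True) (\<phi> False) ^ card S" by simp
  finally show ?thesis .
qed

lemma prod_phi_integrable:
  assumes ind: "indep_vars (\<lambda>_. count_space UNIV) X Ix" and S: "S \<subseteq> Ix"
    and pos: "\<And>b. 0 < (\<phi>::bool \<Rightarrow> real) b"
  shows "integrable M (\<lambda>\<omega>. \<Prod>x\<in>S. \<phi> (X x \<omega>))"
proof -
  have "\<And>\<omega>. norm (\<Prod>x\<in>S. \<phi> (X x \<omega>)) \<le> max (\<phi> True) (\<phi> False) ^ card S"
    by (rule prod_phi_bound) (rule pos)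
  then show ?thesis
  by (intro integrable_const_bound[where B="max (\<phi> True) (\<phi> False) ^ card S"])
     (use prod_phi_meas[OF ind S, of \<phi>] in auto)
qed

lemma prod_phi_integral:
  assumes ind: "indep_vars (\<lambda>_. count_space UNIV) X Ix" and S: "S \<subseteq> Ix" "finite S"
    and pos: "\<And>b. 0 < (\<phi>::bool \<Rightarrow> real) b"
    and mean: "\<And>x. x \<in> Ix \<Longrightarrow> (\<integral>\<omega>. \<phi> (X x \<omega>) \<partial>M) = 1"
  shows "(\<integral>\<omega>. (\<Prod>x\<in>S. \<phi> (X x \<omega>)) \<partial>M) = 1"
proof -
  have i1: "indep_vars (\<lambda>_. borel) (\<lambda>x \<omega>. \<phi> (X x \<omega>)) Ix"
    by (rule indep_vars_compose2[OF ind]) simp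
  have i2: "indep_vars (\<lambda>_. borel) (\<lambda>x \<omega>. \<phi> (X x \<omega>)) S"
    by (rule indep_vars_subset[OF i1 S(1)])
  have "(\<integral>\<omega>. (\<Prod>x\<in>S. \<phi> (X x \<omega>)) \<partial>M) = (\<Prod>x\<in>S. \<integral>\<omega>. \<phi> (X x \<omega>) \<partial>M)"
    by (rule indep_vars_lebesgue_integral[OF S(2) i2])
       (use prod_phi_integrable[OF ind _ pos] S in force)
  also have "\<dots> = 1" using mean S by (auto intro!: prod.neutral)
  finally show ?thesis .
qed

lemma maximal_ineq:
  fixes X :: "nat \<times> 'j \<Rightarrow> 'a \<Rightarrow> bool" and \<phi> :: "bool \<Rightarrow> real"
  assumes ind: "indep_vars (\<lambda>_. count_space UNIV) X Ix"
    and sub: "{k..n} \<times> P \<subseteq> Ix" and finP: "finite P"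
    and pos: "\<And>b. 0 < \<phi> b"
    and mean: "\<And>x. x \<in> Ix \<Longrightarrow> (\<integral>\<omega>. \<phi> (X x \<omega>) \<partial>M) = 1"
    and c: "0 < c"
  shows "prob {\<omega>\<in>space M. \<exists>t\<in>{k..n}. c < (\<Prod>x\<in>{k..t}\<times>P. \<phi> (X x \<omega>))} \<le> 1 / c"
proof -
  define Z where "Z t \<omega> = (\<Prod>x\<in>{k..t}\<times>P. \<phi> (X x \<omega>))" for t \<omega>
  define C where "C t = {\<omega>. c < Z t \<omega> \<and> (\<forall>s\<in>{k..<t}. Z s \<omega> \<le> c)}" for t
  define A where "A t = {\<omega>\<in>space M. c < Z t \<omega> \<and> (\<forall>s\<in>{k..<t}. Z s \<omega> \<le> c)}" for t
  have CA: "C t \<inter> space M = A t" for t unfolding A_def C_def by auto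
  have Zsub: "t \<le> n \<Longrightarrow> {k..t}\<times>P \<subseteq> Ix" for t using sub by auto
  have Zmeas: "t \<le> n \<Longrightarrow> Z t \<in> borel_measurable M" for t
    unfolding Z_def by (rule prod_phi_meas[OF ind Zsub])
  have Ameas: "t \<le> n \<Longrightarrow> A t \<in> sets M" for t
    unfolding A_def by (rule first_cross_sets) (use Zmeas in auto)
  have Zint: "t \<le> n \<Longrightarrow> integrable M (Z t)" for t
    unfolding Z_def by (rule prod_phi_integrable[OF ind Zsub pos])
  have Zpos: "0 \<le> Z t \<omega>" for t \<omega> unfolding Z_def using pos by (simp add: prod_nonneg less_imp_le)
  have Zn1: "(\<integral>\<omega>. Z n \<omega> \<partial>M) = 1"
    unfolding Z_def by (rule prod_phi_integral[OF ind sub _ pos mean]) (use finP in auto)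
  have key: "(\<integral>\<omega>. Z t \<omega> * indicator (C t) \<omega> \<partial>M) = (\<integral>\<omega>. Z n \<omega> * indicator (C t) \<omega> \<partial>M)
       \<and> integrable M (\<lambda>\<omega>. Z n \<omega> * indicator (C t) \<omega>)
       \<and> integrable M (\<lambda>\<omega>. Z t \<omega> * indicator (C t) \<omega>)"
    if t: "t \<in> {k..n}" for t
  proof -
    define W where "W \<omega> = (\<Prod>x\<in>{Suc t..n}\<times>P. \<phi> (X x \<omega>))" for \<omega>
    define F where "F \<omega> = Z t \<omega> * indicator (C t) \<omega>" for \<omega>
    have Wsub: "{Suc t..n}\<times>P \<subseteq> Ix" using sub t by auto
    have split: "Z n \<omega> = Z t \<omega> * W \<omega>" for \<omega>
    proof -
      have "{k..n}\<times>P = {k..t}\<times>P \<union> {Suc t..n}\<times>P" using t by auto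
      then show ?thesis unfolding Z_def W_def
        by (simp only:) (rule prod.union_disjoint, use finP in auto)
    qed
    define g where "g f = (\<Prod>x\<in>{k..t}\<times>P. \<phi> (f x)) *
       indicator {f. c < (\<Prod>x\<in>{k..t}\<times>P. \<phi> (f x)) \<and> (\<forall>s\<in>{k..<t}. (\<Prod>x\<in>{k..s}\<times>P. \<phi> (f x)) \<le> c)} f"
      for f :: "nat \<times> 'j \<Rightarrow> bool"
    define h where "h f = (\<Prod>x\<in>{Suc t..n}\<times>P. \<phi> (f x))" for f :: "nat \<times> 'j \<Rightarrow> bool"
    have iv: "indep_var (PiM ({k..t}\<times>P) (\<lambda>_. count_space UNIV)) (\<lambda>\<omega>. restrict (\<lambda>i. X i \<omega>) ({k..t}\<times>P))
              (PiM ({Suc t..n}\<times>P) (\<lambda>_. count_space UNIV)) (\<lambda>\<omega>. restrict (\<lambda>i. X i \<omega>) ({Suc t..n}\<times>P))"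
      by (rule indep_var_restrict[OF ind]) (use sub t in auto)
    have gm: "g \<in> borel_measurable (PiM ({k..t}\<times>P) (\<lambda>_. count_space UNIV))"
    proof -
      let ?N = "PiM ({k..t}\<times>P) (\<lambda>_. count_space UNIV)"
      have "{f\<in>space ?N. c < (\<Prod>x\<in>{k..t}\<times>P. \<phi> (f x)) \<and> (\<forall>s\<in>{k..<t}. (\<Prod>x\<in>{k..s}\<times>P. \<phi> (f x)) \<le> c)}
             \<in> sets ?N"
        by (rule first_cross_sets[where Y="\<lambda>s f. \<Prod>x\<in>{k..s}\<times>P. \<phi> (f x)"], rule pi_prod_meas) auto
      moreover have "{f. c < (\<Prod>x\<in>{k..t}\<times>P. \<phi> (f x)) \<and> (\<forall>s\<in>{k..<t}. (\<Prod>x\<in>{k..s}\<times>P. \<phi> (f x)) \<le> c)}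
          \<inter> space ?N = {f\<in>space ?N. c < (\<Prod>x\<in>{k..t}\<times>P. \<phi> (f x)) \<and> (\<forall>s\<in>{k..<t}. (\<Prod>x\<in>{k..s}\<times>P. \<phi> (f x)) \<le> c)}"
        by blast
      ultimately have "(indicator {f. c < (\<Prod>x\<in>{k..t}\<times>P. \<phi> (f x)) \<and> (\<forall>s\<in>{k..<t}. (\<Prod>x\<in>{k..s}\<times>P. \<phi> (f x)) \<le> c)}
          :: _ \<Rightarrow> real) \<in> borel_measurable ?N"
        unfolding borel_measurable_indicator_iff by simp
      then show ?thesis unfolding g_def
        by (intro borel_measurable_times pi_prod_meas) auto
    qed
    have hm: "h \<in> borel_measurable (PiM ({Suc t..n}\<times>P) (\<lambda>_. count_space UNIV))"
      unfolding h_def by (rule pi_prod_meas) simp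
    have res: "(\<Prod>x\<in>{k..s}\<times>P. \<phi> (restrict (\<lambda>i. X i \<omega>) ({k..t}\<times>P) x)) = Z s \<omega>" if "s \<le> t" for s \<omega>
      unfolding Z_def using that by (intro prod.cong) auto
    have gF1: "g (restrict (\<lambda>i. X i \<omega>) ({k..t}\<times>P)) = F \<omega>" for \<omega>
    proof -
      have A1: "(\<Prod>x\<in>{k..t}\<times>P. \<phi> (restrict (\<lambda>i. X i \<omega>) ({k..t}\<times>P) x)) = Z t \<omega>"
        by (rule res) simp
      have A2: "(\<forall>s\<in>{k..<t}. (\<Prod>x\<in>{k..s}\<times>P. \<phi> (restrict (\<lambda>i. X i \<omega>) ({k..t}\<times>P) x)) \<le> c)
          = (\<forall>s\<in>{k..<t}. Z s \<omega> \<le> c)"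
        by (rule ball_cong[OF refl]) (subst res, auto)
      show ?thesis unfolding g_def F_def C_def indicator_def by (simp only: mem_Collect_eq A1 A2)
    qed
    have gF: "g \<circ> (\<lambda>\<omega>. restrict (\<lambda>i. X i \<omega>) ({k..t}\<times>P)) = F"
      by (rule ext) (simp only: comp_apply gF1)
    have hW: "h \<circ> (\<lambda>\<omega>. restrict (\<lambda>i. X i \<omega>) ({Suc t..n}\<times>P)) = W"
      by (rule ext) (simp add: h_def W_def)
    have ivFW: "indep_var borel F borel W"
      using indep_var_compose[OF iv gm hm] unfolding gF hW .
    have Fint: "integrable M F"
    proof -
      have "integrable M (\<lambda>\<omega>. Z t \<omega> * indicator (A t) \<omega>)"
        by (rule integrable_real_mult_indicator[OF Ameas Zint]) (use t in auto)
      moreover have "integrable M F \<longleftrightarrow> integrable M (\<lambda>\<omega>. Z t \<omega> * indicator (A t) \<omega>)"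
        by (rule Bochner_Integration.integrable_cong) (auto simp: F_def A_def C_def indicator_def)
      ultimately show ?thesis by simp
    qed
    have Wint: "integrable M W" unfolding W_def by (rule prod_phi_integrable[OF ind Wsub pos])
    have W1: "(\<integral>\<omega>. W \<omega> \<partial>M) = 1"
      unfolding W_def by (rule prod_phi_integral[OF ind Wsub _ pos mean]) (use finP in auto)
    have FW: "(\<lambda>\<omega>. F \<omega> * W \<omega>) = (\<lambda>\<omega>. Z n \<omega> * indicator (C t) \<omega>)"
      by (rule ext) (simp add: F_def split)
    have "(\<integral>\<omega>. F \<omega> * W \<omega> \<partial>M) = (\<integral>\<omega>. F \<omega> \<partial>M) * (\<integral>\<omega>. W \<omega> \<partial>M)"
      by (rule indep_var_lebesgue_integral[OF ivFW Fint Wint])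
    moreover have "integrable M (\<lambda>\<omega>. F \<omega> * W \<omega>)"
      by (rule indep_var_integrable[OF ivFW Fint Wint])
    ultimately have eq: "(\<integral>\<omega>. Z n \<omega> * indicator (C t) \<omega> \<partial>M) = (\<integral>\<omega>. F \<omega> \<partial>M)"
      and int2: "integrable M (\<lambda>\<omega>. Z n \<omega> * indicator (C t) \<omega>)"
      using W1 unfolding FW by simp_all
    show ?thesis using eq int2 Fint unfolding F_def by simp
  qed
  have disj: "disjoint_family_on C {k..n}"
    unfolding disjoint_family_on_def
  proof (intro ballI impI)
    fix t t' assume tt: "t \<in> {k..n}" "t' \<in> {k..n}" "t \<noteq> t'"
    show "C t \<inter> C t' = {}"
    proof (cases "t < t'")
      case True then show ?thesis using tt unfolding C_def by force
    next
      case False then have "t' < t" using tt by simp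
      then show ?thesis using tt unfolding C_def by force
    qed
  qed
  have sub_ev: "{\<omega>\<in>space M. \<exists>t\<in>{k..n}. c < Z t \<omega>} \<subseteq> (\<Union>t\<in>{k..n}. A t)"
  proof
    fix \<omega> assume "\<omega> \<in> {\<omega>\<in>space M. \<exists>t\<in>{k..n}. c < Z t \<omega>}"
    then obtain t where t: "t\<in>{k..n}" "c < Z t \<omega>" and om: "\<omega>\<in>space M" by auto
    define t0 where "t0 = (LEAST t. t \<in> {k..n} \<and> c < Z t \<omega>)"
    have t0: "t0 \<in> {k..n} \<and> c < Z t0 \<omega>"
      unfolding t0_def by (rule LeastI[of _ t]) (use t in auto)
    have "\<forall>s\<in>{k..<t0}. Z s \<omega> \<le> c"
    proof
      fix s assume s: "s\<in>{k..<t0}"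
      then have "\<not> (s \<in> {k..n} \<and> c < Z s \<omega>)"
        using not_less_Least[of s "\<lambda>t. t \<in> {k..n} \<and> c < Z t \<omega>"] unfolding t0_def[symmetric] by auto
      with s t0 show "Z s \<omega> \<le> c" by auto
    qed
    then show "\<omega> \<in> (\<Union>t\<in>{k..n}. A t)" using t0 om unfolding A_def by blast
  qed
  have "prob {\<omega>\<in>space M. \<exists>t\<in>{k..n}. c < (\<Prod>x\<in>{k..t}\<times>P. \<phi> (X x \<omega>))}
      = prob {\<omega>\<in>space M. \<exists>t\<in>{k..n}. c < Z t \<omega>}" unfolding Z_def ..
  also have "\<dots> \<le> prob (\<Union>t\<in>{k..n}. A t)"
    by (rule finite_measure_mono[OF sub_ev]) (use Ameas in auto)
  also have "\<dots> \<le> (\<Sum>t\<in>{k..n}. prob (A t))"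
    by (rule finite_measure_subadditive_finite) (use Ameas in auto)
  also have "\<dots> \<le> (\<Sum>t\<in>{k..n}. (\<integral>\<omega>. Z n \<omega> * indicator (C t) \<omega> \<partial>M) / c)"
  proof (rule sum_mono)
    fix t assume t: "t \<in> {k..n}"
    have "prob (A t) = (\<integral>\<omega>. indicator (C t) \<omega> \<partial>M)" using CA by simp
    also have "\<dots> \<le> (\<integral>\<omega>. Z t \<omega> * indicator (C t) \<omega> / c \<partial>M)"
    proof (rule integral_mono)
      show "integrable M (indicator (C t) :: _ \<Rightarrow> real)"
        using Ameas[of t] t CA[of t] by (simp add: integrable_indicator_iff less_top[symmetric])
      show "integrable M (\<lambda>\<omega>. Z t \<omega> * indicator (C t) \<omega> / c)"
        using key[OF t] by simp
      fix \<omega> show "indicator (C t) \<omega> \<le> Z t \<omega> * indicator (C t) \<omega> / c"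
        using c by (auto simp: indicator_def C_def le_divide_eq)
    qed
    also have "\<dots> = (\<integral>\<omega>. Z n \<omega> * indicator (C t) \<omega> \<partial>M) / c"
      using key[OF t] by simp
    finally show "prob (A t) \<le> (\<integral>\<omega>. Z n \<omega> * indicator (C t) \<omega> \<partial>M) / c" .
  qed
  also have "\<dots> = (\<integral>\<omega>. (\<Sum>t\<in>{k..n}. Z n \<omega> * indicator (C t) \<omega>) \<partial>M) / c"
  proof -
    have "(\<integral>\<omega>. (\<Sum>t\<in>{k..n}. Z n \<omega> * indicator (C t) \<omega>) \<partial>M)
        = (\<Sum>t\<in>{k..n}. (\<integral>\<omega>. Z n \<omega> * indicator (C t) \<omega> \<partial>M))"
      by (rule Bochner_Integration.integral_sum) (use key in auto)
    then show ?thesis by (simp add: sum_divide_distrib)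
  qed
  also have "\<dots> \<le> (\<integral>\<omega>. Z n \<omega> \<partial>M) / c"
  proof (intro divide_right_mono integral_mono)
    show "integrable M (\<lambda>\<omega>. \<Sum>t\<in>{k..n}. Z n \<omega> * indicator (C t) \<omega>)"
      by (rule Bochner_Integration.integrable_sum) (use key in auto)
    show "integrable M (Z n)" by (rule Zint) simp
    fix \<omega>
    have "(\<Sum>t\<in>{k..n}. Z n \<omega> * indicator (C t) \<omega>) = Z n \<omega> * indicator (\<Union>t\<in>{k..n}. C t) \<omega>"
      by (simp add: sum_distrib_left[symmetric] indicator_UN_disjoint[OF _ disj])
    also have "\<dots> \<le> Z n \<omega>" using Zpos[of n \<omega>] by (simp add: indicator_def)
    finally show "(\<Sum>t\<in>{k..n}. Z n \<omega> * indicator (C t) \<omega>) \<le> Z n \<omega>" .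
  qed (use c in simp)
  also have "\<dots> = 1 / c" using Zn1 by simp
  finally show ?thesis .
qed

end

lemma llr_eq:
  assumes fin: "finite V" and p: "0 < p0" "p0 < 1" "0 < p1" "p1 < 1"
  shows "llr_stat p0 p1 G \<omega> t k V =
    ln (\<Prod>x\<in>{k..t}\<times>{(i,j). i \<in> V \<and> j \<in> V \<and> i < j}.
          (\<lambda>b. if b then p1 / p0 else (1 - p1) / (1 - p0)) ((\<lambda>(t,i,j). G t i j) x \<omega>))"
proof -
  define \<phi> where "\<phi> = (\<lambda>b. if b then p1 / p0 else (1 - p1) / (1 - p0))"
  define PV where "PV = {(i,j). i \<in> V \<and> j \<in> V \<and> i < j}"
  have finPV: "finite PV" unfolding PV_def
    by (rule finite_subset[of _ "V \<times> V"]) (use fin in auto)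
  have pos: "0 < \<phi> b" for b using p unfolding \<phi>_def by auto
  have trm: "of_bool b * ln (p1 / p0) + (1 - of_bool b) * ln ((1 - p1) / (1 - p0)) = ln (\<phi> b)" for b
    unfolding \<phi>_def by (cases b) auto
  have "llr_stat p0 p1 G \<omega> t k V = (\<Sum>(i,j)\<in>PV. \<Sum>m\<in>{k..t}. ln (\<phi> (G m i j \<omega>)))"
    unfolding llr_stat_def PV_def trm ..
  also have "\<dots> = (\<Sum>ij\<in>PV. \<Sum>m\<in>{k..t}. ln (\<phi> ((\<lambda>(t,i,j). G t i j) (m, ij) \<omega>)))"
    by (rule sum.cong) auto
  also have "\<dots> = (\<Sum>m\<in>{k..t}. \<Sum>ij\<in>PV. ln (\<phi> ((\<lambda>(t,i,j). G t i j) (m, ij) \<omega>)))"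
    by (rule sum.swap)
  also have "\<dots> = (\<Sum>x\<in>{k..t}\<times>PV. ln (\<phi> ((\<lambda>(t,i,j). G t i j) x \<omega>)))"
    unfolding sum.cartesian_product by (rule sum.cong) auto
  also have "\<dots> = ln (\<Prod>x\<in>{k..t}\<times>PV. \<phi> ((\<lambda>(t,i,j). G t i j) x \<omega>))"
    by (rule ln_prod[symmetric]) (use finPV pos in \<open>auto simp: less_imp_neq[symmetric]\<close>)
  finally show ?thesis unfolding \<phi>_def PV_def .
qed

theorem lemma1:
  fixes M :: "'a measure"
    and G :: "nat \<Rightarrow> nat \<Rightarrow> nat \<Rightarrow> 'a \<Rightarrow> bool"
    and n N m\<alpha> m\<alpha>' :: nat and p0 p1 b :: real and \<V> :: "nat set set"
  assumes "1 \<le> n" and "n < N"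
    and "0 < p0" and "p0 < 1" and "0 < p1" and "p1 < 1"
    and "\<V> \<noteq> {}" and "\<And>V. V \<in> \<V> \<Longrightarrow> V \<subseteq> {1..N} \<and> card V = n"
    and "m\<alpha>' \<le> m\<alpha>"
    and "prob_space M"
    and "prob_space.indep_vars M (\<lambda>_. count_space UNIV) (\<lambda>(t,i,j). G t i j)
           {(t,i,j). 1 \<le> t \<and> 1 \<le> i \<and> i < j \<and> j \<le> N}"
    and "\<And>t i j. 1 \<le> t \<Longrightarrow> 1 \<le> i \<Longrightarrow> i < j \<Longrightarrow> j \<le> N \<Longrightarrow>
           distr M (count_space UNIV) (G t i j) = measure_pmf (bernoulli_pmf p0)"
  shows "\<forall>\<tau>\<ge>1. measure M {\<omega> \<in> space M.
            enat \<tau> \<le> stop_time p0 p1 \<V> m\<alpha> m\<alpha>' b G \<omega> \<and>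
            stop_time p0 p1 \<V> m\<alpha> m\<alpha>' b G \<omega> < enat (\<tau> + m\<alpha>)}
         \<le> 2 * real m\<alpha> * exp (- b) * real (N choose n)"
proof (intro allI impI)
  interpret prob_space M by fact
  fix \<tau> :: nat assume \<tau>: "1 \<le> \<tau>"
  define Ix where "Ix = {(t::nat,i::nat,j::nat). 1 \<le> t \<and> 1 \<le> i \<and> i < j \<and> j \<le> N}"
  define X where "X = (\<lambda>(t::nat,i::nat,j::nat). G t i j)"
  define \<phi> where "\<phi> = (\<lambda>b. if b then p1 / p0 else (1 - p1) / (1 - p0))"
  define PV where "PV V = {(i,j). i \<in> V \<and> j \<in> V \<and> i < j}" for V :: "nat set"
  define nn where "nn = \<tau> + m\<alpha> - 1"
  define K where "K = {k. 1 \<le> k \<and> \<tau> \<le> k + m\<alpha> \<and> k < \<tau> + m\<alpha>}"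
  define B where "B = (\<lambda>(k,V). {\<omega>\<in>space M. \<exists>t\<in>{k..nn}. exp b < (\<Prod>x\<in>{k..t}\<times>PV V. \<phi> (X x \<omega>))})"
  define T where "T \<omega> = stop_time p0 p1 \<V> m\<alpha> m\<alpha>' b G \<omega>" for \<omega>
  have ind: "indep_vars (\<lambda>_. count_space UNIV) X Ix"
    using assms(11) unfolding X_def Ix_def .
  have pos: "0 < \<phi> b" for b using assms(3-6) unfolding \<phi>_def by auto
  have finV: "V \<in> \<V> \<Longrightarrow> finite V" for V using assms(8)[of V] finite_subset by blast
  have rv: "x \<in> Ix \<Longrightarrow> X x \<in> measurable M (count_space UNIV)" for x
    using ind by (auto simp: indep_vars_def)
  have mean: "(\<integral>\<omega>. \<phi> (X x \<omega>) \<partial>M) = 1" if x: "x \<in> Ix" for x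
  proof -
    obtain t i j where xe: "x = (t,i,j)" by (cases x) auto
    have c: "1 \<le> t" "1 \<le> i" "i < j" "j \<le> N" using x unfolding xe Ix_def by auto
    have Xx: "X x = G t i j" unfolding xe X_def by simp
    have "(\<integral>\<omega>. \<phi> (X x \<omega>) \<partial>M) = integral\<^sup>L (distr M (count_space UNIV) (G t i j)) \<phi>"
      by (subst integral_distr) (use rv[OF x] Xx in auto)
    also have "\<dots> = integral\<^sup>L (measure_pmf (bernoulli_pmf p0)) \<phi>"
      using assms(12)[OF c] by simp
    also have "\<dots> = 1" using assms(3-6) by (simp add: \<phi>_def)
    finally show ?thesis .
  qed
  have PVsub: "V \<in> \<V> \<Longrightarrow> 1 \<le> k \<Longrightarrow> {k..nn} \<times> PV V \<subseteq> Ix" for V k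
    using assms(8)[of V] unfolding PV_def Ix_def by auto
  have finPV: "V \<in> \<V> \<Longrightarrow> finite (PV V)" for V
    unfolding PV_def by (rule finite_subset[of _ "V \<times> V"]) (use finV in auto)
  have Bbound: "prob (B kV) \<le> exp (- b)" if kV: "kV \<in> K \<times> \<V>" for kV
  proof -
    obtain k V where e: "kV = (k,V)" by (cases kV) auto
    have k: "1 \<le> k" "V \<in> \<V>" using kV unfolding e K_def by auto
    have "prob (B kV) \<le> 1 / exp b" unfolding e B_def
      by (simp only: case_prod_conv, rule maximal_ineq[OF ind PVsub[OF k(2,1)] finPV[OF k(2)] pos mean]) auto
    then show ?thesis by (simp add: exp_minus field_simps)
  qed
  have Bmeas: "B kV \<in> sets M" if kV: "kV \<in> K \<times> \<V>" for kV
  proof -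
    obtain k V where e: "kV = (k,V)" by (cases kV) auto
    have k: "1 \<le> k" "V \<in> \<V>" using kV unfolding e K_def by auto
    show ?thesis unfolding e B_def
    proof (simp only: case_prod_conv, rule sets.sets_Collect_finite_Ex)
      fix t assume t: "t \<in> {k..nn}"
      have "{k..t} \<times> PV V \<subseteq> Ix" using PVsub[OF k(2,1)] t by auto
      then show "{\<omega> \<in> space M. exp b < (\<Prod>x\<in>{k..t} \<times> PV V. \<phi> (X x \<omega>))} \<in> sets M"
        by (intro borel_measurable_less measurable_const prod_phi_meas[OF ind]) auto
    qed simp
  qed
  have finK: "finite K" unfolding K_def by (rule finite_subset[of _ "{..<\<tau>+m\<alpha>}"]) auto
  have cardK: "card K \<le> 2 * m\<alpha>"
  proof -
    have "K \<subseteq> {\<tau> - m\<alpha>..<\<tau>+m\<alpha>}" unfolding K_def by auto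
    then have "card K \<le> card {\<tau> - m\<alpha>..<\<tau>+m\<alpha>}" by (rule card_mono[rotated]) simp
    then show ?thesis by simp
  qed
  have finVV: "finite \<V>"
    by (rule finite_subset[of _ "Pow {1..N}"]) (use assms(8) in auto)
  have cardV: "card \<V> \<le> N choose n"
  proof -
    have "\<V> \<subseteq> {B. B \<subseteq> {1..N} \<and> card B = n}" using assms(8) by auto
    then have "card \<V> \<le> card {B. B \<subseteq> {1..N} \<and> card B = n}" by (rule card_mono[rotated]) simp
    also have "\<dots> = N choose n" by (subst n_subsets) simp_all
    finally show ?thesis .
  qed
  have sub: "{\<omega> \<in> space M. enat \<tau> \<le> T \<omega> \<and> T \<omega> < enat (\<tau> + m\<alpha>)} \<subseteq> (\<Union>kV\<in>K \<times> \<V>. B kV)"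
  proof
    fix \<omega> assume "\<omega> \<in> {\<omega> \<in> space M. enat \<tau> \<le> T \<omega> \<and> T \<omega> < enat (\<tau> + m\<alpha>)}"
    then have om: "\<omega> \<in> space M" and T1: "enat \<tau> \<le> T \<omega>" and T2: "T \<omega> < enat (\<tau> + m\<alpha>)" by auto
    have ex: "\<exists>t. alarm p0 p1 \<V> m\<alpha> m\<alpha>' b G \<omega> t"
      using T2 unfolding T_def stop_time_def by (auto split: if_splits)
    define t0 where "t0 = (LEAST t. alarm p0 p1 \<V> m\<alpha> m\<alpha>' b G \<omega> t)"
    have Tt0: "T \<omega> = enat t0" using ex unfolding T_def stop_time_def t0_def by simp
    have al: "alarm p0 p1 \<V> m\<alpha> m\<alpha>' b G \<omega> t0" unfolding t0_def using ex by (rule LeastI_ex)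
    have t0b: "\<tau> \<le> t0" "t0 < \<tau> + m\<alpha>" using T1 T2 unfolding Tt0 by auto
    obtain k V where k: "1 \<le> k" "int t0 - int m\<alpha> \<le> int k" "int k \<le> int t0 - int m\<alpha>'"
      and V: "V \<in> \<V>" and llr: "b < llr_stat p0 p1 G \<omega> t0 k V"
      using al unfolding alarm_def by blast
    have kK: "k \<in> K" using k t0b unfolding K_def by auto
    have t0n: "t0 \<in> {k..nn}" using k t0b unfolding nn_def by auto
    have "llr_stat p0 p1 G \<omega> t0 k V = ln (\<Prod>x\<in>{k..t0}\<times>PV V. \<phi> (X x \<omega>))"
      unfolding PV_def \<phi>_def X_def by (rule llr_eq[OF finV[OF V] assms(3-6)])
    moreover have "0 < (\<Prod>x\<in>{k..t0}\<times>PV V. \<phi> (X x \<omega>))" using pos by (simp add: prod_pos)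
    ultimately have "exp b < (\<Prod>x\<in>{k..t0}\<times>PV V. \<phi> (X x \<omega>))"
      using llr by (metis exp_less_cancel_iff exp_ln)
    then have "\<omega> \<in> B (k,V)" unfolding B_def using om t0n by auto
    then show "\<omega> \<in> (\<Union>kV\<in>K \<times> \<V>. B kV)" using kK V by blast
  qed
  have "measure M {\<omega> \<in> space M. enat \<tau> \<le> T \<omega> \<and> T \<omega> < enat (\<tau> + m\<alpha>)} \<le> prob (\<Union>kV\<in>K \<times> \<V>. B kV)"
    by (rule finite_measure_mono[OF sub]) (use Bmeas finK finVV in auto)
  also have "\<dots> \<le> (\<Sum>kV\<in>K \<times> \<V>. prob (B kV))"
    by (rule finite_measure_subadditive_finite) (use Bmeas finK finVV in auto)
  also have "\<dots> \<le> real (card (K \<times> \<V>)) * exp (- b)"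
    by (rule sum_bounded_above) (rule Bbound)
  also have "\<dots> = real (card K) * real (card \<V>) * exp (- b)" by (simp add: card_cartesian_product)
  also have "\<dots> \<le> real (2 * m\<alpha>) * real (N choose n) * exp (- b)"
    by (intro mult_right_mono mult_mono) (use cardK cardV in auto)
  finally show "measure M {\<omega> \<in> space M. enat \<tau> \<le> stop_time p0 p1 \<V> m\<alpha> m\<alpha>' b G \<omega> \<and>
            stop_time p0 p1 \<V> m\<alpha> m\<alpha>' b G \<omega> < enat (\<tau> + m\<alpha>)}
         \<le> 2 * real m\<alpha> * exp (- b) * real (N choose n)"
    unfolding T_def by (simp add: mult_ac)
qed

end
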